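(* Let $a,b,c,d>0$ and let $G_B:\mathbb R^2\to\mathbb R^2$ be given by $G_B(0)=0$ and $G_B(u)=\frac{1}{|u|}\big((au_1^2+bu_2^2)u_1,\ (cu_1^2+du_2^2)u_2\big)$ for $u\neq0$. If $$\max\{a+c,b+d\}\le 2(b+c+2\sqrt{ad})\quad\text{and}\quad 2(b+c-2\sqrt{ad})\le\min\{a+c,b+d\},$$ then $G_B$ is monotone. If both inequalities are strict, then $G_B$ is $3$-monotone.
   Context: A map $F:\mathbb R^n\to\mathbb R^n$ is monotone if $(F(u)-F(v))\cdot(u-v)\ge0$ for all $u,v$; for $\alpha>0$ it is $\alpha$-monotone if there is $C>0$ with $(F(u)-F(v))\cdot(u-v)\ge C|u-v|^\alpha$ for all $u,v\in\mathbb R^n$. $|\cdot|$ is the Euclidean norm. *)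

theory Defs
  imports "HOL-Analysis.Analysis"
begin

definition monotone_map :: "('a::real_inner \<Rightarrow> 'a) \<Rightarrow> bool" where
  "monotone_map F \<longleftrightarrow> (\<forall>u v. (F u - F v) \<bullet> (u - v) \<ge> 0)"

definition alpha_monotone :: "real \<Rightarrow> ('a::real_inner \<Rightarrow> 'a) \<Rightarrow> bool" where
  "alpha_monotone \<alpha> F \<longleftrightarrow>
     (\<exists>C>0. \<forall>u v. (F u - F v) \<bullet> (u - v) \<ge> C * norm (u - v) powr \<alpha>)"

definition G_B :: "real \<Rightarrow> real \<Rightarrow> real \<Rightarrow> real \<Rightarrow> real^2 \<Rightarrow> real^2" where
  "G_B a b c d u =
     (if u = 0 then 0
      else (1 / norm u) *\<^sub>R
        (vector [(a * (u$1)^2 + b * (u$2)^2) * u$1,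
                 (c * (u$1)^2 + d * (u$2)^2) * u$2] :: real^2))"

end

theory Submission
  imports Defs "HOL-Analysis.Analysis"
begin


lemma amgm_s:
  fixes a d rt xx yy :: real
  assumes "a > 0" "rt \<ge> 0" "rt^2 = a*d"
  shows "2*rt*xx*yy \<le> a*xx^2 + d*yy^2"
proof -
  have "a*(a*xx^2 + d*yy^2 - 2*rt*xx*yy) = (a*xx - rt*yy)^2"
    using assms(3) by (simp add: power2_eq_square algebra_simps)
  also have "\<dots> \<ge> 0" by simp
  finally show ?thesis using assms(1)
    by (metis diff_ge_0_iff_ge zero_le_mult_iff not_less)
qed

definition Qf :: "real \<Rightarrow> real \<Rightarrow> real \<Rightarrow> real \<Rightarrow> real \<Rightarrow> real \<Rightarrow> real \<Rightarrow> real \<Rightarrow> real" where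
  "Qf a b c d x y h1 h2 =
     (2*a*(x^2)^2 + 3*a*x^2*y^2 + b*(y^2)^2)*h1^2
     + x*y*((2*b+c-a)*x^2 + (b+2*c-d)*y^2)*h1*h2
     + (c*(x^2)^2 + 3*d*x^2*y^2 + 2*d*(y^2)^2)*h2^2"

lemma Q_bound:
  fixes a b c d rt l k x y h1 h2 :: real
  assumes pos: "a > 0" "b > 0" "c > 0" "d > 0"
    and rt: "rt \<ge> 0" "rt^2 = a*d"
    and l: "0 \<le> l" "l \<le> 1"
    and al: "\<bar>2*b+c-a\<bar> \<le> 4*l*rt" and be: "\<bar>b+2*c-d\<bar> \<le> 4*l*rt"
    and k: "k \<le> (1-l)*a" "k \<le> b" "k \<le> (1-l)*d" "k \<le> c"
  shows "Qf a b c d x y h1 h2 \<ge> k*(x^2+y^2)^2*(h1^2+h2^2)"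
proof -
  define p where "p = x^2"
  define q where "q = y^2"
  have p0: "p \<ge> 0" and q0: "q \<ge> 0" by (simp_all add: p_def q_def)
  have T1: "\<bar>x*y*(2*b+c-a)*p*h1*h2\<bar> \<le> l*(2*a*p^2*h1^2 + 2*d*p*q*h2^2)"
  proof -
    have "\<bar>x*y*(2*b+c-a)*p*h1*h2\<bar> = \<bar>2*b+c-a\<bar> * ((p*\<bar>h1\<bar>) * \<bar>x*y*h2\<bar>)"
      using p0 by (simp add: abs_mult)
    also have "\<dots> \<le> (4*l*rt) * ((p*\<bar>h1\<bar>) * \<bar>x*y*h2\<bar>)"
      using al p0 by (intro mult_right_mono) auto
    also have "\<dots> = 2*l*(2*rt*(p*\<bar>h1\<bar>)*\<bar>x*y*h2\<bar>)" by simp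
    also have "\<dots> \<le> 2*l*(a*(p*\<bar>h1\<bar>)^2 + d*\<bar>x*y*h2\<bar>^2)"
      using mult_left_mono[OF amgm_s[OF pos(1) rt, of "p*\<bar>h1\<bar>" "\<bar>x*y*h2\<bar>"], of "2*l"] l by simp
    also have "\<dots> = l*(2*a*p^2*h1^2 + 2*d*p*q*h2^2)"
      by (simp add: p_def q_def power2_eq_square algebra_simps)
    finally show ?thesis .
  qed
  have T2: "\<bar>x*y*(b+2*c-d)*q*h1*h2\<bar> \<le> l*(2*a*p*q*h1^2 + 2*d*q^2*h2^2)"
  proof -
    have "\<bar>x*y*(b+2*c-d)*q*h1*h2\<bar> = \<bar>b+2*c-d\<bar> * (\<bar>x*y*h1\<bar> * (q*\<bar>h2\<bar>))"
      using q0 by (simp add: abs_mult)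
    also have "\<dots> \<le> (4*l*rt) * (\<bar>x*y*h1\<bar> * (q*\<bar>h2\<bar>))"
      using be q0 by (intro mult_right_mono) auto
    also have "\<dots> = 2*l*(2*rt*\<bar>x*y*h1\<bar>*(q*\<bar>h2\<bar>))" by simp
    also have "\<dots> \<le> 2*l*(a*\<bar>x*y*h1\<bar>^2 + d*(q*\<bar>h2\<bar>)^2)"
      using mult_left_mono[OF amgm_s[OF pos(1) rt, of "\<bar>x*y*h1\<bar>" "q*\<bar>h2\<bar>"], of "2*l"] l by simp
    also have "\<dots> = l*(2*a*p*q*h1^2 + 2*d*q^2*h2^2)"
      by (simp add: p_def q_def power2_eq_square algebra_simps)
    finally show ?thesis .
  qed
  have Qe: "Qf a b c d x y h1 h2 = (2*a*p^2 + 3*a*p*q + b*q^2)*h1^2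
     + x*y*(2*b+c-a)*p*h1*h2 + x*y*(b+2*c-d)*q*h1*h2
     + (c*p^2 + 3*d*p*q + 2*d*q^2)*h2^2"
    by (simp add: Qf_def p_def q_def algebra_simps)
  have C1: "(2*a*p^2 + 3*a*p*q + b*q^2 - 2*l*a*p^2 - 2*l*a*p*q) \<ge> k*(p+q)^2"
  proof -
    have "(2*a*p^2 + 3*a*p*q + b*q^2 - 2*l*a*p^2 - 2*l*a*p*q) - k*(p+q)^2
        = (2*(1-l)*a - k)*p^2 + ((3-2*l)*a - 2*k)*(p*q) + (b-k)*q^2"
      by (simp add: power2_eq_square algebra_simps)
    moreover have "(2*(1-l)*a - k)*p^2 \<ge> 0"
    proof -
      have "(1-l)*a \<ge> 0" using l pos by simp
      then have "2*(1-l)*a - k \<ge> 0" using k by linarith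
      then show ?thesis by simp
    qed
    moreover have "((3-2*l)*a - 2*k)*(p*q) \<ge> 0" using k p0 q0 pos by (intro mult_nonneg_nonneg) (auto simp: algebra_simps)
    moreover have "(b-k)*q^2 \<ge> 0" using k by simp
    ultimately show ?thesis by linarith
  qed
  have C2: "(c*p^2 + 3*d*p*q + 2*d*q^2 - 2*l*d*p*q - 2*l*d*q^2) \<ge> k*(p+q)^2"
  proof -
    have "(c*p^2 + 3*d*p*q + 2*d*q^2 - 2*l*d*p*q - 2*l*d*q^2) - k*(p+q)^2
        = (c-k)*p^2 + ((3-2*l)*d - 2*k)*(p*q) + (2*(1-l)*d - k)*q^2"
      by (simp add: power2_eq_square algebra_simps)
    moreover have "(2*(1-l)*d - k)*q^2 \<ge> 0"
    proof -
      have "(1-l)*d \<ge> 0" using l pos by simp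
      then have "2*(1-l)*d - k \<ge> 0" using k by linarith
      then show ?thesis by simp
    qed
    moreover have "((3-2*l)*d - 2*k)*(p*q) \<ge> 0" using k p0 q0 pos by (intro mult_nonneg_nonneg) (auto simp: algebra_simps)
    moreover have "(c-k)*p^2 \<ge> 0" using k by simp
    ultimately show ?thesis by linarith
  qed
  have "k*(p+q)^2*h1^2 \<le> (2*a*p^2 + 3*a*p*q + b*q^2 - 2*l*a*p^2 - 2*l*a*p*q)*h1^2"
    using C1 by (intro mult_right_mono) auto
  moreover have "k*(p+q)^2*h2^2 \<le> (c*p^2 + 3*d*p*q + 2*d*q^2 - 2*l*d*p*q - 2*l*d*q^2)*h2^2"
    using C2 by (intro mult_right_mono) auto
  moreover have "x*y*(2*b+c-a)*p*h1*h2 \<ge> - (l*(2*a*p^2*h1^2 + 2*d*p*q*h2^2))" using T1 by linarith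
  moreover have "x*y*(b+2*c-d)*q*h1*h2 \<ge> - (l*(2*a*p*q*h1^2 + 2*d*q^2*h2^2))" using T2 by linarith
  ultimately have "Qf a b c d x y h1 h2 \<ge> k*(p+q)^2*h1^2 + k*(p+q)^2*h2^2"
    unfolding Qe by (simp add: algebra_simps)
  then show ?thesis by (simp add: p_def q_def algebra_simps)
qed

definition Mf :: "real \<Rightarrow> real \<Rightarrow> real \<Rightarrow> real \<Rightarrow> real \<Rightarrow> real \<Rightarrow> real \<Rightarrow> real \<Rightarrow> real" where
  "Mf a b c d x y h1 h2 = (a*x^2+b*y^2)*x*h1 + (c*x^2+d*y^2)*y*h2"

definition phi :: "real \<Rightarrow> real \<Rightarrow> real \<Rightarrow> real \<Rightarrow> real \<Rightarrow> real \<Rightarrow> real \<Rightarrow> real \<Rightarrow> real \<Rightarrow> real" where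
  "phi a b c d v1 v2 h1 h2 t = Mf a b c d (v1+t*h1) (v2+t*h2) h1 h2 / sqrt ((v1+t*h1)^2 + (v2+t*h2)^2)"

lemma phi_deriv:
  assumes nz: "(v1+t*h1)^2 + (v2+t*h2)^2 \<noteq> 0"
  shows "(phi a b c d v1 v2 h1 h2 has_real_derivative
     Qf a b c d (v1+t*h1) (v2+t*h2) h1 h2 / (sqrt ((v1+t*h1)^2 + (v2+t*h2)^2))^3) (at t)"
proof -
  define x where "x = v1+t*h1"
  define y where "y = v2+t*h2"
  define R where "R = sqrt (x^2 + y^2)"
  have pos: "(v1+t*h1)^2 + (v2+t*h2)^2 > 0" using nz
    by (metis add_nonneg_nonneg zero_le_power2 less_eq_real_def)
  have R0: "R > 0" using pos by (simp add: R_def x_def y_def)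
  have Rn: "sqrt ((v1+t*h1)^2 + (v2+t*h2)^2) \<noteq> 0" using pos by (simp del: sum_power2_eq_zero_iff)
  have R2: "R^2 = x^2 + y^2" using pos by (simp add: R_def x_def y_def)
  have fe: "phi a b c d v1 v2 h1 h2 = (\<lambda>t. Mf a b c d (v1+t*h1) (v2+t*h2) h1 h2 / sqrt ((v1+t*h1)^2 + (v2+t*h2)^2))"
    by (rule ext) (simp add: phi_def)
  have dM: "((\<lambda>t. Mf a b c d (v1+t*h1) (v2+t*h2) h1 h2) has_real_derivative
      (3*a*x^2 + b*y^2)*h1^2 + 2*(b+c)*x*y*h1*h2 + (c*x^2 + 3*d*y^2)*h2^2) (at t)"
    unfolding Mf_def
    by (rule derivative_eq_intros refl)+ (simp add: x_def y_def power2_eq_square algebra_simps)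
  have dI: "((\<lambda>t. (v1+t*h1)^2 + (v2+t*h2)^2) has_real_derivative 2*(x*h1+y*h2)) (at t)"
    by (rule derivative_eq_intros refl)+ (simp add: x_def y_def algebra_simps)
  have eq: "inverse (sqrt ((v1+t*h1)^2 + (v2+t*h2)^2)) / 2 * (2*(x*h1+y*h2)) = (x*h1+y*h2)/R"
    using R0 by (simp add: R_def x_def y_def divide_simps algebra_simps)
  have dR: "((\<lambda>t. sqrt ((v1+t*h1)^2 + (v2+t*h2)^2)) has_real_derivative (x*h1+y*h2)/R) (at t)"
    using DERIV_chain2[OF DERIV_real_sqrt[OF pos] dI] unfolding eq .
  have "(phi a b c d v1 v2 h1 h2 has_real_derivative
      (((3*a*x^2 + b*y^2)*h1^2 + 2*(b+c)*x*y*h1*h2 + (c*x^2 + 3*d*y^2)*h2^2) * R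
        - Mf a b c d x y h1 h2 * ((x*h1+y*h2)/R)) / (R*R)) (at t)"
    using DERIV_divide[OF dM dR Rn, folded fe x_def y_def, folded R_def] .
  moreover have "(((3*a*x^2 + b*y^2)*h1^2 + 2*(b+c)*x*y*h1*h2 + (c*x^2 + 3*d*y^2)*h2^2) * R
        - Mf a b c d x y h1 h2 * ((x*h1+y*h2)/R)) / (R*R) = Qf a b c d x y h1 h2 / R^3"
  proof -
    have "(((3*a*x^2 + b*y^2)*h1^2 + 2*(b+c)*x*y*h1*h2 + (c*x^2 + 3*d*y^2)*h2^2) * R
        - Mf a b c d x y h1 h2 * ((x*h1+y*h2)/R)) / (R*R)
      = (((3*a*x^2 + b*y^2)*h1^2 + 2*(b+c)*x*y*h1*h2 + (c*x^2 + 3*d*y^2)*h2^2) * R^2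
        - Mf a b c d x y h1 h2 * (x*h1+y*h2)) / R^3"
      using R0 by (simp add: field_simps power2_eq_square power3_eq_cube)
    also have "\<dots> = Qf a b c d x y h1 h2 / R^3"
      unfolding R2 by (simp add: Qf_def Mf_def power2_eq_square algebra_simps)
    finally show ?thesis .
  qed
  ultimately show ?thesis by (simp add: x_def y_def R_def del: phi_def)
qed




lemma incr_cmp:
  fixes f g f' g' :: "real \<Rightarrow> real" and x y :: real
  assumes "x \<le> y"
    and df: "\<And>t. (f has_real_derivative f' t) (at t)"
    and dg: "\<And>t. (g has_real_derivative g' t) (at t)"
    and le: "\<And>t. g' t \<le> f' t"
  shows "g y - g x \<le> f y - f x"
proof -
  have d: "\<And>t. ((\<lambda>t. f t - g t) has_real_derivative f' t - g' t) (at t)"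
    using df dg by (rule DERIV_diff)
  have "continuous_on {x..y} (\<lambda>t. f t - g t)"
    by (rule continuous_at_imp_continuous_on) (use d DERIV_isCont in blast)
  then have "f x - g x \<le> f y - g y"
    using DERIV_nonneg_imp_increasing_open[OF assms(1), of "\<lambda>t. f t - g t"] d le
    by (metis diff_ge_0_iff_ge)
  then show ?thesis by simp
qed

lemma clamp_bound:
  fixes t0 m :: real
  assumes "m = max 0 (min t0 1)"
  shows "t0^2 - (t0-m)^2 + (1-t0)^2 - (m-t0)^2 \<ge> 1/2"
proof (cases "t0 < 0")
  case True
  then have "m = 0" using assms by simp
  then have "t0^2 - (t0-m)^2 + (1-t0)^2 - (m-t0)^2 = 1 - 2*t0"
    by (simp add: power2_eq_square algebra_simps)
  then show ?thesis using True by linarith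
next
  case False
  show ?thesis
  proof (cases "t0 > 1")
    case True
    then have "m = 1" using assms by simp
    then have "t0^2 - (t0-m)^2 + (1-t0)^2 - (m-t0)^2 = 2*t0 - 1"
      by (simp add: power2_eq_square algebra_simps)
    then show ?thesis using True by linarith
  next
    case F2: False
    then have "m = t0" using assms False by simp
    then have "t0^2 - (t0-m)^2 + (1-t0)^2 - (m-t0)^2 = 2*(t0-1/2)^2 + 1/2"
      by (simp add: power2_eq_square algebra_simps)
    moreover have "2*(t0-1/2)^2 \<ge> 0" by simp
    ultimately show ?thesis by linarith
  qed
qed

lemma sqbracket:
  fixes t0 :: real
  shows "(1-t0)*\<bar>1-t0\<bar> + t0*\<bar>t0\<bar> \<ge> 1/2"
proof (cases "t0 \<ge> 0")
  case True
  show ?thesis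
  proof (cases "t0 \<le> 1")
    case True
    then have "\<bar>1-t0\<bar> = 1-t0" "\<bar>t0\<bar> = t0" using \<open>t0 \<ge> 0\<close> by simp_all
    then have "(1-t0)*\<bar>1-t0\<bar> + t0*\<bar>t0\<bar> = 2*(t0-1/2)^2 + 1/2"
      by (simp add: power2_eq_square algebra_simps)
    moreover have "2*(t0-1/2)^2 \<ge> 0" by simp
    ultimately show ?thesis by linarith
  next
    case False
    then have "\<bar>1-t0\<bar> = t0-1" "\<bar>t0\<bar> = t0" using \<open>t0 \<ge> 0\<close> by simp_all
    then have "(1-t0)*\<bar>1-t0\<bar> + t0*\<bar>t0\<bar> = 2*t0 - 1"
      by (simp add: power2_eq_square algebra_simps)
    then show ?thesis using False by linarith
  qed
next
  case False
  then have "\<bar>1-t0\<bar> = 1-t0" "\<bar>t0\<bar> = -t0" by simp_all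
  then have "(1-t0)*\<bar>1-t0\<bar> + t0*\<bar>t0\<bar> = 1 - 2*t0"
    by (simp add: power2_eq_square algebra_simps)
  then show ?thesis using False by linarith
qed

lemma cubic_div:
  fixes lam M S :: real
  shows "lam^3 * M / (\<bar>lam\<bar> * S) = lam*\<bar>lam\<bar>*M/S"
proof (cases "lam = 0")
  case False
  have "lam^3 = (lam*\<bar>lam\<bar>)*\<bar>lam\<bar>"
  proof -
    have "\<bar>lam\<bar>*\<bar>lam\<bar> = lam*lam" by (rule abs_mult_self_eq)
    then show ?thesis by (simp add: power3_eq_cube mult.assoc)
  qed
  then have "lam^3 * M / (\<bar>lam\<bar> * S) = (lam*\<bar>lam\<bar>*M) * \<bar>lam\<bar> / (\<bar>lam\<bar> * S)"
    by (simp add: mult.commute mult.left_commute)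
  also have "\<dots> = lam*\<bar>lam\<bar>*M/S" using False by simp
  finally show ?thesis .
qed simp




lemma phi_main:
  fixes a b c d k v1 v2 h1 h2 :: real
  assumes pos: "a > 0" "b > 0" "c > 0" "d > 0" and k0: "k \<ge> 0" and ka: "k \<le> a" and kd: "k \<le> d"
    and Qb: "\<And>x y. Qf a b c d x y h1 h2 \<ge> k*(x^2+y^2)^2*(h1^2+h2^2)"
    and hnz: "h1^2+h2^2 > 0"
  shows "phi a b c d v1 v2 h1 h2 1 - phi a b c d v1 v2 h1 h2 0 \<ge> k/4 * (h1^2+h2^2) * sqrt (h1^2+h2^2)"
proof -
  define H where "H = h1^2+h2^2"
  define S where "S = sqrt H"
  have H0: "H > 0" using hnz by (simp add: H_def)
  have S0: "S > 0" using H0 by (simp add: S_def)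
  have SS: "S*S = H" using H0 by (simp add: S_def)
  have kHS: "k*H*S \<ge> 0" using k0 H0 S0 by simp
  show ?thesis
  proof (cases "\<exists>t0. v1+t0*h1 = 0 \<and> v2+t0*h2 = 0")
    case True
    then obtain t0 where t0: "v1 = -t0*h1" "v2 = -t0*h2"
      by (metis add.commute add_eq_0_iff2 mult_minus_left)
    define Mh where "Mh = Mf a b c d h1 h2 h1 h2"
    have ph: "phi a b c d v1 v2 h1 h2 t = (t-t0)*\<bar>t-t0\<bar>*Mh/S" for t
    proof -
      have e1: "v1+t*h1 = (t-t0)*h1" "v2+t*h2 = (t-t0)*h2" using t0 by (simp_all add: algebra_simps)
      have e2: "Mf a b c d ((t-t0)*h1) ((t-t0)*h2) h1 h2 = (t-t0)^3 * Mh"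
        by (simp add: Mf_def Mh_def power2_eq_square power3_eq_cube algebra_simps)
      have e3: "sqrt (((t-t0)*h1)^2 + ((t-t0)*h2)^2) = \<bar>t-t0\<bar> * S"
      proof -
        have "((t-t0)*h1)^2 + ((t-t0)*h2)^2 = (t-t0)^2 * H"
          by (simp add: H_def power2_eq_square algebra_simps)
        then show ?thesis by (simp add: S_def real_sqrt_mult)
      qed
      show ?thesis unfolding phi_def e1 e2 e3 by (rule cubic_div)
    qed
    have brk: "phi a b c d v1 v2 h1 h2 1 - phi a b c d v1 v2 h1 h2 0
        = ((1-t0)*\<bar>1-t0\<bar> + t0*\<bar>t0\<bar>) * (Mh/S)"
      unfolding ph using S0 by (simp add: field_simps)
    have Mh: "Mh \<ge> k*H^2/2"
    proof -
      have "Mh - k*H^2/2 = (a-k)*(h1^2)^2 + (d-k)*(h2^2)^2 + (b+c)*(h1^2*h2^2) + k/2*(h1^2-h2^2)^2"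
        by (simp add: Mh_def Mf_def H_def power2_eq_square algebra_simps)
      moreover have "(a-k)*(h1^2)^2 \<ge> 0" using ka by simp
      moreover have "(d-k)*(h2^2)^2 \<ge> 0" using kd by simp
      moreover have "(b+c)*(h1^2*h2^2) \<ge> 0" using pos by simp
      moreover have "k/2*(h1^2-h2^2)^2 \<ge> 0" using k0 by simp
      ultimately show ?thesis by linarith
    qed
    have MhS: "Mh/S \<ge> k*H*S/2"
    proof -
      have "k*H*S/2 = (k*H^2/2)/S" using S0 SS by (simp add: field_simps power2_eq_square)
      also have "\<dots> \<le> Mh/S" using divide_right_mono[OF Mh, of S] S0 by simp
      finally show ?thesis .
    qed
    have "1/2 * (k*H*S/2) \<le> ((1-t0)*\<bar>1-t0\<bar> + t0*\<bar>t0\<bar>) * (Mh/S)"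
      using sqbracket[of t0] MhS kHS by (intro mult_mono) auto
    then show ?thesis using brk by (simp add: H_def[symmetric] S_def[symmetric])
  next
    case False
    define t0 where "t0 = -(v1*h1+v2*h2)/H"
    define D where "D t = Qf a b c d (v1+t*h1) (v2+t*h2) h1 h2 / (sqrt ((v1+t*h1)^2 + (v2+t*h2)^2))^3" for t
    have nz: "(v1+t*h1)^2 + (v2+t*h2)^2 \<noteq> 0" for t using False by auto
    have dphi: "(phi a b c d v1 v2 h1 h2 has_real_derivative D t) (at t)" for t
      unfolding D_def by (rule phi_deriv[OF nz])
    have Dlow: "k*H*S*\<bar>t - t0\<bar> \<le> D t" for t
    proof -
      define x where "x = v1+t*h1"
      define y where "y = v2+t*h2"
      define R where "R = sqrt (x^2+y^2)"
      have P: "x^2+y^2 > 0" using nz[of t] unfolding x_def y_def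
        by (metis add_nonneg_nonneg zero_le_power2 less_eq_real_def)
      have R0: "R > 0" using P by (simp add: R_def)
      have R2: "R^2 = x^2+y^2" using P by (simp add: R_def)
      have R4: "(x^2+y^2)^2 = R^4"
      proof -
        have "R^4 = (R^2)^2" by (simp add: power_mult[symmetric])
        then show ?thesis using R2 by simp
      qed
      have "k*R*H = k*(x^2+y^2)^2*H / R^3" unfolding R4 using R0
        by (simp add: field_simps power_numeral_reduce)
      also have "\<dots> \<le> D t" unfolding D_def x_def[symmetric] y_def[symmetric] R_def[symmetric]
        using Qb[of x y] R0 by (simp add: H_def divide_right_mono)
      finally have A: "k*R*H \<le> D t" .
      have CS: "\<bar>x*h1+y*h2\<bar> \<le> R*S"
      proof -
        have "(x*h1+y*h2)^2 \<le> (x^2+y^2)*H"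
        proof -
          have "(x^2+y^2)*H - (x*h1+y*h2)^2 = (x*h2-y*h1)^2"
            by (simp add: H_def power2_eq_square algebra_simps)
          then show ?thesis by (metis diff_ge_0_iff_ge zero_le_power2)
        qed
        then have "sqrt ((x*h1+y*h2)^2) \<le> sqrt ((x^2+y^2)*H)" by (rule real_sqrt_le_mono)
        then show ?thesis by (simp add: R_def S_def real_sqrt_mult)
      qed
      have Ht0: "H*t0 = -(v1*h1+v2*h2)" using H0 by (simp add: t0_def)
      have "x*h1+y*h2 = (v1*h1+v2*h2) + t*H"
        by (simp add: x_def y_def H_def power2_eq_square algebra_simps)
      also have "\<dots> = H*(t-t0)" using Ht0 by (simp add: algebra_simps)
      finally have lin: "x*h1+y*h2 = H*(t-t0)" .
      have "H*\<bar>t-t0\<bar> \<le> R*S" using CS H0 unfolding lin by (simp add: abs_mult)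
      then have "S*(H*\<bar>t-t0\<bar>) \<le> S*(R*S)" using S0 by (intro mult_left_mono) auto
      then have "H*S*\<bar>t-t0\<bar> \<le> R*H" using SS by (simp add: algebra_simps)
      then have "k*(H*S*\<bar>t-t0\<bar>) \<le> k*(R*H)" using k0 by (intro mult_left_mono) auto
      then show ?thesis using A by (simp add: algebra_simps)
    qed
    define m where "m = max 0 (min t0 1)"
    have m01: "0 \<le> m" "m \<le> 1" by (auto simp: m_def)
    have dg1: "((\<lambda>t. -(k*H*S)*(t0-t)^2/2) has_real_derivative k*H*S*(t0-t)) (at t)" for t
      by (auto intro!: derivative_eq_intros simp: field_simps)
    have dg2: "((\<lambda>t. (k*H*S)*(t-t0)^2/2) has_real_derivative k*H*S*(t-t0)) (at t)" for t
      by (auto intro!: derivative_eq_intros simp: field_simps)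
    have le1: "k*H*S*(t0-t) \<le> D t" for t
    proof -
      have "k*H*S*(t0-t) \<le> k*H*S*\<bar>t-t0\<bar>" using kHS by (intro mult_left_mono) auto
      then show ?thesis using Dlow[of t] by linarith
    qed
    have le2: "k*H*S*(t-t0) \<le> D t" for t
    proof -
      have "k*H*S*(t-t0) \<le> k*H*S*\<bar>t-t0\<bar>" using kHS by (intro mult_left_mono) auto
      then show ?thesis using Dlow[of t] by linarith
    qed
    have I1: "(-(k*H*S)*(t0-m)^2/2) - (-(k*H*S)*(t0-0)^2/2)
        \<le> phi a b c d v1 v2 h1 h2 m - phi a b c d v1 v2 h1 h2 0"
      by (rule incr_cmp[OF m01(1) dphi dg1 le1])
    have I2: "((k*H*S)*(1-t0)^2/2) - ((k*H*S)*(m-t0)^2/2)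
        \<le> phi a b c d v1 v2 h1 h2 1 - phi a b c d v1 v2 h1 h2 m"
      by (rule incr_cmp[OF m01(2) dphi dg2 le2])
    have "(k*H*S)/2 * (t0^2 - (t0-m)^2 + (1-t0)^2 - (m-t0)^2)
        \<le> phi a b c d v1 v2 h1 h2 1 - phi a b c d v1 v2 h1 h2 0"
      using I1 I2 by (simp add: algebra_simps)
    moreover have "(k*H*S)/2 * (1/2) \<le> (k*H*S)/2 * (t0^2 - (t0-m)^2 + (1-t0)^2 - (m-t0)^2)"
      using clamp_bound[OF m_def] kHS by (intro mult_left_mono) auto
    ultimately have "(k*H*S)/2 * (1/2) \<le> phi a b c d v1 v2 h1 h2 1 - phi a b c d v1 v2 h1 h2 0"
      by linarith
    then show ?thesis unfolding H_def[symmetric] S_def[symmetric] by (simp add: algebra_simps)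
  qed
qed




lemma norm2: "norm (w::real^2) = sqrt ((w$1)^2 + (w$2)^2)"
  by (simp add: norm_eq_sqrt_inner inner_vec_def sum_2 power2_eq_square)

lemma G_dot:
  "G_B a b c d w \<bullet> h = Mf a b c d (w$1) (w$2) (h$1) (h$2) / sqrt ((w$1)^2 + (w$2)^2)"
proof (cases "w = 0")
  case True then show ?thesis by (simp add: G_B_def Mf_def)
next
  case False
  then show ?thesis
    by (simp add: G_B_def Mf_def inner_vec_def sum_2 norm2 field_simps add_divide_distrib)
qed

lemma G_diff:
  fixes u v :: "real^2"
  shows "(G_B a b c d u - G_B a b c d v) \<bullet> (u - v)
    = phi a b c d (v$1) (v$2) ((u-v)$1) ((u-v)$2) 1 - phi a b c d (v$1) (v$2) ((u-v)$1) ((u-v)$2) 0"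
  by (simp add: inner_diff_left G_dot phi_def)

lemma norm_pow3:
  fixes h :: "real^2"
  shows "norm h powr 3 = ((h$1)^2 + (h$2)^2) * sqrt ((h$1)^2 + (h$2)^2)"
proof (cases "h = 0")
  case True then show ?thesis by simp
next
  case False
  then have "norm h > 0" by simp
  then have "norm h powr 3 = norm h ^ 3" by (simp add: powr_realpow)
  also have "\<dots> = (norm h)^2 * norm h" by (simp add: power3_eq_cube power2_eq_square)
  also have "\<dots> = ((h$1)^2 + (h$2)^2) * sqrt ((h$1)^2 + (h$2)^2)"
    unfolding norm2 by simp
  finally show ?thesis .
qed

lemma h_pos:
  fixes u v :: "real^2"
  assumes "u \<noteq> v"
  shows "((u-v)$1)^2 + ((u-v)$2)^2 > 0"
proof -
  have "norm (u - v) > 0" using assms by simp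
  then have "sqrt (((u-v)$1)^2 + ((u-v)$2)^2) > 0" unfolding norm2 .
  then show ?thesis by simp
qed

lemma core:
  fixes a b c d l k :: real
  assumes pos: "a > 0" "b > 0" "c > 0" "d > 0"
    and l: "0 \<le> l" "l \<le> 1"
    and al: "\<bar>2*b+c-a\<bar> \<le> 4*l * sqrt (a*d)" and be: "\<bar>b+2*c-d\<bar> \<le> 4*l * sqrt (a*d)"
    and k: "0 \<le> k" "k \<le> (1-l)*a" "k \<le> b" "k \<le> (1-l)*d" "k \<le> c"
  shows "(G_B a b c d u - G_B a b c d v) \<bullet> (u - v) \<ge> k/4 * norm (u - v) powr 3"
proof (cases "u = v")
  case True then show ?thesis by simp
next
  case False
  have rt: "sqrt (a*d) \<ge> 0" "(sqrt (a*d))^2 = a*d" using pos by simp_all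
  have ka: "k \<le> a"
  proof -
    have "(1-l)*a \<le> a" using l pos by (simp add: algebra_simps)
    then show ?thesis using k by linarith
  qed
  have kd: "k \<le> d"
  proof -
    have "(1-l)*d \<le> d" using l pos by (simp add: algebra_simps)
    then show ?thesis using k by linarith
  qed
  have Qb: "\<And>x y. Qf a b c d x y h1 h2 \<ge> k*(x^2+y^2)^2*(h1^2+h2^2)" for h1 h2
    by (rule Q_bound[OF pos rt l al be k(2-5)])
  show ?thesis
    unfolding G_diff norm_pow3
    using phi_main[OF pos k(1) ka kd Qb h_pos[OF False]] by (simp add: mult.assoc)
qed




theorem mainTheorem3:
  fixes a b c d :: real
  assumes "a > 0" "b > 0" "c > 0" "d > 0"
  shows "(max (a + c) (b + d) \<le> 2 * (b + c + 2 * sqrt (a * d)) \<and>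
          2 * (b + c - 2 * sqrt (a * d)) \<le> min (a + c) (b + d)
            \<longrightarrow> monotone_map (G_B a b c d))
       \<and> (max (a + c) (b + d) < 2 * (b + c + 2 * sqrt (a * d)) \<and>
          2 * (b + c - 2 * sqrt (a * d)) < min (a + c) (b + d)
            \<longrightarrow> alpha_monotone 3 (G_B a b c d))"
proof (intro conjI impI)
  assume h: "max (a + c) (b + d) \<le> 2 * (b + c + 2 * sqrt (a * d)) \<and>
          2 * (b + c - 2 * sqrt (a * d)) \<le> min (a + c) (b + d)"
  have al: "\<bar>2*b+c-a\<bar> \<le> 4*1 * sqrt (a*d)" and be: "\<bar>b+2*c-d\<bar> \<le> 4*1 * sqrt (a*d)"
    using h by (auto simp: abs_le_iff)
  show "monotone_map (G_B a b c d)"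
    unfolding monotone_map_def
  proof (intro allI)
    fix u v :: "real^2"
    have "(G_B a b c d u - G_B a b c d v) \<bullet> (u - v) \<ge> 0/4 * norm (u - v) powr 3"
      by (rule core[OF assms _ _ al be]) (use assms in auto)
    then show "(G_B a b c d u - G_B a b c d v) \<bullet> (u - v) \<ge> 0" by simp
  qed
next
  assume h: "max (a + c) (b + d) < 2 * (b + c + 2 * sqrt (a * d)) \<and>
          2 * (b + c - 2 * sqrt (a * d)) < min (a + c) (b + d)"
  define rq where "rq = sqrt (a*d)"
  have rq0: "rq > 0" using assms by (simp add: rq_def)
  have al0: "\<bar>2*b+c-a\<bar> < 4 * rq" and be0: "\<bar>b+2*c-d\<bar> < 4 * rq"
    using h by (auto simp: abs_less_iff rq_def)
  define l where "l = max \<bar>2*b+c-a\<bar> \<bar>b+2*c-d\<bar> / (4*rq)"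
  have l0: "0 \<le> l" using rq0 by (simp add: l_def)
  have l1: "l < 1" using rq0 al0 be0 by (simp add: l_def)
  have lsr: "4*l * sqrt (a*d) = max \<bar>2*b+c-a\<bar> \<bar>b+2*c-d\<bar>"
    using rq0 by (simp add: l_def rq_def[symmetric])
  have al: "\<bar>2*b+c-a\<bar> \<le> 4*l * sqrt (a*d)" and be: "\<bar>b+2*c-d\<bar> \<le> 4*l * sqrt (a*d)"
    unfolding lsr by simp_all
  define k where "k = min (min ((1-l)*a) b) (min ((1-l)*d) c)"
  have k0: "k > 0" using l1 assms by (simp add: k_def)
  have ks: "k \<le> (1-l)*a" "k \<le> b" "k \<le> (1-l)*d" "k \<le> c" by (simp_all add: k_def)
  show "alpha_monotone 3 (G_B a b c d)"
    unfolding alpha_monotone_def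
  proof (intro exI[of _ "k/4"] conjI allI)
    show "k/4 > 0" using k0 by simp
    fix u v :: "real^2"
    show "(G_B a b c d u - G_B a b c d v) \<bullet> (u - v) \<ge> k/4 * norm (u - v) powr 3"
      by (rule core[OF assms l0 _ al be _ ks]) (use l1 k0 in auto)
  qed
qed


end
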